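(* Let $p$ be an odd prime, $M$ the sub-add move matrix, and $k$ the $\mathbb Z_p$-order of $M$. Then $\Gamma_{M,\,p}$ contains secondary cycles if and only if $8$ does not divide $k$.
   Context: The sub-add move matrix is $M=\begin{pmatrix}1&-1\\1&1\end{pmatrix}$. $\Gamma_{M,\,p}$ is the directed graph with vertex set $\mathbb Z_p^2$ and arcs $((a,b),(a-b,a+b))$ (mod $p$; loops allowed). The $\mathbb Z_p$-order $k$ of $M$ is the least positive integer with $M^k\equiv I\pmod p$; it equals $4t$ where $t$ is the multiplicative order of $-4$ in $GF(p)$. A directed cycle is a cycle in the underlying undirected graph such that in the induced directed subgraph every vertex has in- and out-degree $1$; a loop is a directed $1$-cycle. A primary cycle is a directed cycle of length $k$; a secondary cycle is a directed cycle that is neither primary nor a $1$-cycle. *)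

theory Defs
  imports "HOL-Analysis.Analysis" "HOL-Number_Theory.Cong"
begin

definition subadd_matrix :: "int^2^2" where
  "subadd_matrix = (\<chi> i j. if i = 1 then (if j = 1 then 1 else -1) else 1)"

primrec mat_pow :: "int^2^2 \<Rightarrow> nat \<Rightarrow> int^2^2" where
  "mat_pow A 0 = mat 1"
| "mat_pow A (Suc n) = A ** mat_pow A n"

definition zp_order :: "int \<Rightarrow> nat" where
  "zp_order p = (LEAST k. k > 0 \<and>
      (\<forall>i j. [mat_pow subadd_matrix k $ i $ j = mat 1 $ i $ j] (mod p)))"

text \<open>Vertices of Gamma_{M,p}: Z_p^2, represented by pairs of residues 0..p-1.\<close>
definition gamma_vertices :: "int \<Rightarrow> (int \<times> int) set" where
  "gamma_vertices p = {0..<p} \<times> {0..<p}"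

definition gamma_arc :: "int \<Rightarrow> int \<times> int \<Rightarrow> int \<times> int \<Rightarrow> bool" where
  "gamma_arc p u v \<longleftrightarrow> u \<in> gamma_vertices p \<and>
      v = ((fst u - snd u) mod p, (fst u + snd u) mod p)"

text \<open>A directed cycle, given as the cyclic list of its (distinct) vertices
  v_0,...,v_{n-1} with arcs v_i -> v_{i+1 mod n}; length 1 is a loop.\<close>
definition directed_cycle :: "int \<Rightarrow> (int \<times> int) list \<Rightarrow> bool" where
  "directed_cycle p vs \<longleftrightarrow> vs \<noteq> [] \<and> distinct vs \<and> set vs \<subseteq> gamma_vertices p \<and>
      (\<forall>i < length vs. gamma_arc p (vs ! i) (vs ! ((i + 1) mod length vs)))"

definition secondary_cycle :: "int \<Rightarrow> (int \<times> int) list \<Rightarrow> bool" where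
  "secondary_cycle p vs \<longleftrightarrow> directed_cycle p vs \<and>
      length vs \<noteq> zp_order p \<and> length vs \<noteq> 1"

end

theory Submission
  imports Defs "HOL-Number_Theory.Number_Theory"
begin

fun AB :: "nat \<Rightarrow> int \<times> int" where
  "AB 0 = (1, 0)"
| "AB (Suc n) = (fst (AB n) - snd (AB n), fst (AB n) + snd (AB n))"

definition "cA n = fst (AB n)"
definition "cB n = snd (AB n)"

lemma cAB_Suc: "cA (Suc n) = cA n - cB n" "cB (Suc n) = cA n + cB n"
  "cA 0 = 1" "cB 0 = 0"
  by (simp_all add: cA_def cB_def)

lemma cAB_4: "cA (n + 4) = -4 * cA n \<and> cB (n + 4) = -4 * cB n"
  by (simp add: numeral_eq_Suc cAB_Suc algebra_simps)

lemma cAB_closed: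
  "cA (4*m) = (-4)^m \<and> cB (4*m) = 0 \<and>
   cA (4*m+1) = (-4)^m \<and> cB (4*m+1) = (-4)^m \<and>
   cA (4*m+2) = 0 \<and> cB (4*m+2) = 2*(-4)^m \<and>
   cA (4*m+3) = -2*(-4)^m \<and> cB (4*m+3) = 2*(-4)^m"
proof (induction m)
  case 0
  then show ?case by (simp add: numeral_eq_Suc cAB_Suc)
next
  case (Suc m)
  have e: "4 * Suc m + r = (4*m + r) + 4" for r by simp
  show ?case unfolding e using Suc cAB_4[of "4*m"] cAB_4[of "4*m+1"] cAB_4[of "4*m+2"] cAB_4[of "4*m+3"]
    by (simp add: algebra_simps)
qed

lemma mat_pow_eq:
  "mat_pow subadd_matrix n = (\<chi> i j. if i = 1 then (if j = 1 then cA n else - cB n)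
                                     else (if j = 1 then cB n else cA n))"
proof (induction n)
  case 0
  show ?case
  proof (subst vec_eq_iff, intro allI, subst vec_eq_iff, intro allI)
    fix i j :: 2
    show "mat_pow subadd_matrix 0 $ i $ j = (\<chi> i j. if i = 1 then (if j = 1 then cA 0 else - cB 0)
                                     else (if j = 1 then cB 0 else cA 0)) $ i $ j"
      using exhaust_2[of i] exhaust_2[of j] by (auto simp: mat_def cAB_Suc)
  qed
next
  case (Suc n)
  have M: "subadd_matrix $ 1 $ 1 = 1" "subadd_matrix $ 1 $ 2 = -1"
    "subadd_matrix $ 2 $ 1 = 1" "subadd_matrix $ 2 $ 2 = 1" by (simp_all add: subadd_matrix_def)
  show ?case
  proof (subst vec_eq_iff, intro allI, subst vec_eq_iff, intro allI)
    fix i j :: 2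
    show "mat_pow subadd_matrix (Suc n) $ i $ j = (\<chi> i j. if i = 1 then (if j = 1 then cA (Suc n) else - cB (Suc n))
                                     else (if j = 1 then cB (Suc n) else cA (Suc n))) $ i $ j"
      using exhaust_2[of i] exhaust_2[of j]
      by (auto simp: Suc.IH matrix_matrix_mult_def sum_2 M cAB_Suc algebra_simps)
  qed
qed

lemma mat_pow_cond:
  "(\<forall>i j. [mat_pow subadd_matrix k $ i $ j = mat 1 $ i $ j] (mod p)) \<longleftrightarrow>
   [cA k = 1] (mod p) \<and> [cB k = 0] (mod p)"
proof
  assume h: "\<forall>i j. [mat_pow subadd_matrix k $ i $ j = mat 1 $ i $ j] (mod p)"
  show "[cA k = 1] (mod p) \<and> [cB k = 0] (mod p)"
    using h[rule_format, of 1 1] h[rule_format, of 2 1] by (simp add: mat_pow_eq mat_def)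
next
  assume h: "[cA k = 1] (mod p) \<and> [cB k = 0] (mod p)"
  show "\<forall>i j. [mat_pow subadd_matrix k $ i $ j = mat 1 $ i $ j] (mod p)"
  proof (intro allI)
    fix i j :: 2
    show "[mat_pow subadd_matrix k $ i $ j = mat 1 $ i $ j] (mod p)"
      using h exhaust_2[of i] exhaust_2[of j]
      by (auto simp: mat_pow_eq mat_def cong_0_iff)
  qed
qed


lemma p_facts:
  fixes p :: int
  assumes "prime p" "odd p"
  shows "p > 2" "\<not> p dvd 2 * (-4)^m" "\<not> p dvd (-4)^m" "\<not> p dvd 2"
proof -
  have p2: "p \<ge> 2" using assms prime_ge_2_int by blast
  show n2: "\<not> p dvd 2"
  proof
    assume "p dvd 2"
    then have "p \<le> 2" by (simp add: zdvd_imp_le)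
    with p2 have "p = 2" by simp
    with assms show False by simp
  qed
  then show "p > 2" using p2 assms by (cases "p = 2") auto
  have n4: "\<not> p dvd (-4)^m"
  proof (cases "m = 0")
    case True then show ?thesis using assms by auto
  next
    case False
    then have "p dvd (-4)^m \<longleftrightarrow> p dvd (-4)" using prime_dvd_power_iff assms by blast
    also have "\<dots> \<longleftrightarrow> p dvd 2 * 2" by simp
    also have "\<dots> \<longleftrightarrow> p dvd 2" using prime_dvd_mult_iff assms by blast
    finally show ?thesis using n2 by simp
  qed
  then show "\<not> p dvd (-4)^m" .
  show "\<not> p dvd 2 * (-4)^m" using n2 n4 prime_dvd_mult_iff assms by blast
qed

definition "Pn p n \<longleftrightarrow> [cA n = 1] (mod p) \<and> [cB n = 0] (mod p)"

lemma Pn_4: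
  fixes p :: int
  assumes "prime p" "odd p" "Pn p n"
  shows "4 dvd n"
proof -
  define m where "m = n div 4"
  define r where "r = n mod 4"
  have n: "n = 4*m + r" unfolding m_def r_def by simp
  have "r < 4" unfolding r_def by simp
  then have "r = 0 \<or> r = 1 \<or> r = 2 \<or> r = 3" by auto
  moreover have "r \<noteq> 1"
  proof
    assume "r = 1"
    then have "[(-4)^m = 0] (mod p)" using assms(3) cAB_closed[of m] by (simp add: n Pn_def)
    then show False using p_facts[OF assms(1,2)] by (simp add: cong_0_iff)
  qed
  moreover have "r \<noteq> 2"
  proof
    assume "r = 2"
    then have "[0 = 1] (mod p)" using assms(3) cAB_closed[of m] by (simp add: n Pn_def)
    then have "p dvd 1" by (simp add: cong_0_iff cong_sym_eq)
    then show False using assms(1) not_prime_unit by blast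
  qed
  moreover have "r \<noteq> 3"
  proof
    assume "r = 3"
    then have "[2*(-4)^m = 0] (mod p)" using assms(3) cAB_closed[of m] by (simp add: n Pn_def)
    then show False using p_facts[OF assms(1,2)] by (simp add: cong_0_iff)
  qed
  ultimately show ?thesis unfolding r_def by auto
qed

lemma Pn_4m: "Pn p (4*m) \<longleftrightarrow> [(-4)^m = 1] (mod p)"
  using cAB_closed[of m] by (simp add: Pn_def)

lemma Pn_exists:
  fixes p :: int
  assumes "prime p" "odd p"
  shows "Pn p (4 * (2 * (nat p - 1)))"
proof -
  have "prime (nat p)" using assms by simp
  moreover have "\<not> nat p dvd 4"
  proof
    assume "nat p dvd 4"
    then have "p dvd 4" using assms prime_ge_0_int
      by (metis int_dvd_int_iff int_nat_eq of_nat_numeral)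
    then have "p dvd (-4)^1" by simp
    then show False using p_facts[OF assms] by blast
  qed
  ultimately have "[4 ^ (nat p - 1) = 1] (mod nat p)" by (rule fermat_theorem)
  then have "[int (4 ^ (nat p - 1)) = int 1] (mod int (nat p))" using cong_int_iff by blast
  then have "[4 ^ (nat p - 1) = 1] (mod p)" using assms prime_ge_0_int by simp
  then have "[(4 ^ (nat p - 1))^2 = 1^2] (mod p)" by (rule cong_pow)
  moreover have "((-4::int)^(2 * (nat p - 1))) = (4 ^ (nat p - 1))^2"
    by (simp add: power_mult[symmetric] mult.commute)
  ultimately show ?thesis unfolding Pn_4m by simp
qed


lemma zp_order_eq: "zp_order p = (LEAST k. k > 0 \<and> Pn p k)"
  unfolding zp_order_def mat_pow_cond Pn_def by simp

lemma order_props: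
  fixes p :: int
  assumes "prime p" "odd p"
  obtains t where "zp_order p = 4 * t" "t > 0" "[(-4)^t = 1] (mod p)"
    "\<And>m. 0 < m \<Longrightarrow> m < t \<Longrightarrow> \<not> [(-4)^m = 1] (mod p)"
    "Pn p (zp_order p)"
proof -
  let ?k = "zp_order p"
  have ex: "4 * (2 * (nat p - 1)) > 0 \<and> Pn p (4 * (2 * (nat p - 1)))"
    using Pn_exists[OF assms] p_facts[OF assms] by simp
  have k1: "?k > 0 \<and> Pn p ?k" unfolding zp_order_eq using ex by (rule LeastI)
  have k2: "\<not> (n > 0 \<and> Pn p n)" if "n < ?k" for n
    using that unfolding zp_order_eq by (rule not_less_Least)
  from Pn_4[OF assms] k1 obtain t where t: "?k = 4 * t" by blast
  show ?thesis
  proof (rule that[OF t])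
    show "t > 0" using k1 t by simp
    show "[(-4)^t = 1] (mod p)" using k1 t Pn_4m by metis
    show "\<not> [(-4)^m = 1] (mod p)" if "0 < m" "m < t" for m
      using k2[of "4*m"] that t Pn_4m by auto
    show "Pn p ?k" using k1 by simp
  qed
qed

lemma ord_dvd:
  fixes p :: int
  assumes "t > 0" "[(-4)^t = 1] (mod p)"
    "\<And>m. 0 < m \<Longrightarrow> m < t \<Longrightarrow> \<not> [(-4)^m = 1] (mod p)"
    "[(-4)^a = 1] (mod p)"
  shows "t dvd a"
proof (rule ccontr)
  assume nd: "\<not> t dvd a"
  have "(-4::int)^a = (-4)^(t * (a div t) + a mod t)" by simp
  also have "\<dots> = ((-4)^t)^(a div t) * (-4)^(a mod t)"
    by (simp only: power_add power_mult)
  finally have e: "(-4::int)^a = ((-4)^t)^(a div t) * (-4)^(a mod t)" .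
  have "[((-4::int)^t)^(a div t) = 1^(a div t)] (mod p)" using assms(2) by (rule cong_pow)
  then have "[((-4::int)^t)^(a div t) * (-4)^(a mod t) = 1 * (-4)^(a mod t)] (mod p)"
    by (simp only: power_one cong_scalar_right)
  then have "[(-4::int)^a = (-4)^(a mod t)] (mod p)" using e by simp
  then have "[(-4::int)^(a mod t) = 1] (mod p)" using assms(4) cong_sym cong_trans by blast
  moreover have "0 < a mod t" using nd by (simp add: dvd_eq_mod_eq_0)
  moreover have "a mod t < t" using assms(1) by simp
  ultimately show False using assms(3) by blast
qed

definition "fstep p u = ((fst u - snd u) mod p, (fst u + snd u) mod p)"

lemma arc_iff: "gamma_arc p u v \<longleftrightarrow> u \<in> gamma_vertices p \<and> v = fstep p u"
  unfolding gamma_arc_def fstep_def by simp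

lemma f_iter:
  assumes "u \<in> gamma_vertices p"
  shows "(fstep p ^^ n) u = ((cA n * fst u - cB n * snd u) mod p, (cB n * fst u + cA n * snd u) mod p)"
proof (induction n)
  case 0
  then show ?case using assms by (auto simp: gamma_vertices_def cAB_Suc)
next
  case (Suc n)
  show ?case
    apply (simp only: funpow.simps comp_apply Suc.IH)
    apply (simp add: fstep_def cAB_Suc mod_diff_eq mod_add_eq)
    apply (simp add: algebra_simps)
    done
qed

lemma fstep_V: "p > 0 \<Longrightarrow> fstep p u \<in> gamma_vertices p"
  by (simp add: fstep_def gamma_vertices_def)

lemma fiter_V: "p > 0 \<Longrightarrow> u \<in> gamma_vertices p \<Longrightarrow> (fstep p ^^ n) u \<in> gamma_vertices p"
  by (induction n) (auto simp: fstep_V)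

lemma per_mult: "(h ^^ b) x = x \<Longrightarrow> (h ^^ (b * m)) x = x"
proof (induction m)
  case 0 then show ?case by simp
next
  case (Suc m)
  have "(h ^^ (b * Suc m)) x = (h ^^ b) ((h ^^ (b * m)) x)"
    by (simp add: funpow_add)
  then show ?case using Suc by simp
qed

lemma per_mod: "(h ^^ a) x = x \<Longrightarrow> (h ^^ b) x = x \<Longrightarrow> (h ^^ (a mod b)) x = x"
proof -
  assume a: "(h ^^ a) x = x" and b: "(h ^^ b) x = x"
  have "(h ^^ a) x = (h ^^ (a mod b + b * (a div b))) x" by simp
  also have "\<dots> = (h ^^ (a mod b)) ((h ^^ (b * (a div b))) x)"
    by (simp only: funpow_add comp_apply)
  finally have "(h ^^ a) x = (h ^^ (a mod b)) ((h ^^ (b * (a div b))) x)" .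
  then show ?thesis using a per_mult[OF b] by simp
qed

lemma cancel_lemma:
  fixes p a c :: int
  assumes "prime p" "0 \<le> a" "a < p" "a \<noteq> 0" "(c * a) mod p = a"
  shows "[c = 1] (mod p)"
proof -
  have "[c * a = 1 * a] (mod p)" using assms by (simp add: cong_def)
  moreover have "coprime a p"
  proof -
    have "\<not> p dvd a"
    proof
      assume "p dvd a"
      then have "p \<le> a" using zdvd_imp_le assms(2,4) by simp
      then show False using assms(3) by simp
    qed
    then show ?thesis using assms(1) prime_imp_coprime coprime_commute by blast
  qed
  ultimately show ?thesis using cong_mult_rcancel by blast
qed


lemma cycle_iter:
  assumes "directed_cycle p vs"
  shows "\<forall>i < length vs. vs ! i = (fstep p ^^ i) (vs ! 0)"
    "(fstep p ^^ length vs) (vs ! 0) = vs ! 0"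
proof -
  let ?L = "length vs"
  have L: "?L > 0" using assms by (simp add: directed_cycle_def)
  have all: "\<forall>i < ?L. gamma_arc p (vs ! i) (vs ! ((i + 1) mod ?L))"
    using assms unfolding directed_cycle_def by blast
  have arc: "vs ! ((i + 1) mod ?L) = fstep p (vs ! i)" if "i < ?L" for i
    using all that unfolding arc_iff by blast
  show A: "\<forall>i < ?L. vs ! i = (fstep p ^^ i) (vs ! 0)"
  proof (intro allI impI)
    fix i assume "i < ?L"
    then show "vs ! i = (fstep p ^^ i) (vs ! 0)"
    proof (induction i)
      case 0 then show ?case by simp
    next
      case (Suc i)
      then have "vs ! Suc i = fstep p (vs ! i)" using arc[of i] by simp
      moreover have "vs ! i = (fstep p ^^ i) (vs ! 0)" using Suc by simp
      ultimately show ?case by simp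
    qed
  qed
  have "vs ! 0 = fstep p (vs ! (?L - 1))" using arc[of "?L - 1"] L by simp
  also have "\<dots> = fstep p ((fstep p ^^ (?L - 1)) (vs ! 0))"
  proof -
    have "?L - 1 < ?L" using L by simp
    then have "vs ! (?L - 1) = (fstep p ^^ (?L - 1)) (vs ! 0)" using A by blast
    then show ?thesis by (simp only:)
  qed
  also have "\<dots> = (fstep p ^^ ?L) (vs ! 0)"
  proof -
    obtain n where n: "?L = Suc n" using L by (cases ?L) auto
    show ?thesis unfolding n by simp
  qed
  finally show "(fstep p ^^ ?L) (vs ! 0) = vs ! 0" by simp
qed

lemma per_scalar:
  fixes p :: int
  assumes "prime p" "x \<in> gamma_vertices p" "x \<noteq> (0, 0)" "(fstep p ^^ (4 * m)) x = x"
  shows "[(-4)^m = 1] (mod p)"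
proof -
  obtain a b where x: "x = (a, b)" by (cases x) auto
  have r: "0 \<le> a" "a < p" "0 \<le> b" "b < p" using assms(2) x by (auto simp: gamma_vertices_def)
  have e: "((-4)^m * a) mod p = a" "((-4)^m * b) mod p = b"
    using assms(4) f_iter[OF assms(2), of "4*m"] cAB_closed[of m] x by auto
  show ?thesis
  proof (cases "a = 0")
    case True
    then have "b \<noteq> 0" using assms(3) x by simp
    then show ?thesis using cancel_lemma[OF assms(1) r(3,4) _ e(2)] by simp
  next
    case False
    then show ?thesis using cancel_lemma[OF assms(1) r(1,2) _ e(1)] by simp
  qed
qed

lemma per_k:
  fixes p :: int
  assumes "x \<in> gamma_vertices p" "Pn p k"
  shows "(fstep p ^^ k) x = x"
proof -
  obtain a b where x: "x = (a, b)" by (cases x) auto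
  have r: "0 \<le> a" "a < p" "0 \<le> b" "b < p" using assms(1) x by (auto simp: gamma_vertices_def)
  have c: "[cA k = 1] (mod p)" "[cB k = 0] (mod p)" using assms(2) by (auto simp: Pn_def)
  have "[cA k * a - cB k * b = 1 * a - 0 * b] (mod p)"
    using c by (intro cong_diff cong_mult cong_refl)
  then have 1: "(cA k * a - cB k * b) mod p = a" using r by (simp add: cong_def)
  have "[cB k * a + cA k * b = 0 * a + 1 * b] (mod p)"
    using c by (intro cong_add cong_mult cong_refl)
  then have 2: "(cB k * a + cA k * b) mod p = b" using r by (simp add: cong_def)
  show ?thesis using f_iter[OF assms(1), of k] 1 2 x by simp
qed


lemma dir1:
  fixes p :: int
  assumes pr: "prime p" "odd p" and sc: "secondary_cycle p vs"
  shows "\<not> 8 dvd zp_order p"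
proof
  assume k8: "8 dvd zp_order p"
  obtain t where kt: "zp_order p = 4 * t" and t0: "t > 0" and tt: "[(-4)^t = 1] (mod p)"
    and tmin: "\<And>m. 0 < m \<Longrightarrow> m < t \<Longrightarrow> \<not> [(-4)^m = 1] (mod p)"
    and Pk: "Pn p (zp_order p)"
    using order_props[OF pr] by blast
  have p0: "p > 0" using p_facts[OF pr] by simp
  have dc: "directed_cycle p vs" and Lk: "length vs \<noteq> zp_order p" and L1: "length vs \<noteq> 1"
    using sc by (auto simp: secondary_cycle_def)
  define L where "L = length vs"
  define x where "x = vs ! 0"
  have L0: "L > 0" using dc by (simp add: directed_cycle_def L_def)
  have "L \<noteq> 1" using L1 L_def by simp
  then have L2: "L \<ge> 2" using L0 by linarith
  have xV: "x \<in> gamma_vertices p"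
    using dc L0 unfolding directed_cycle_def x_def L_def by (meson nth_mem subsetD)
  have it: "\<forall>i < L. vs ! i = (fstep p ^^ i) x" unfolding L_def x_def by (rule cycle_iter(1)[OF dc])
  have perL: "(fstep p ^^ L) x = x" unfolding L_def x_def by (rule cycle_iter(2)[OF dc])
  have notper: "(fstep p ^^ j) x \<noteq> x" if "0 < j" "j < L" for j
  proof
    assume "(fstep p ^^ j) x = x"
    moreover have "vs ! j = (fstep p ^^ j) x" using it that by blast
    ultimately have "vs ! j = vs ! 0" unfolding x_def by simp
    then have "j = 0" using dc that L0 unfolding directed_cycle_def L_def
      by (simp add: nth_eq_iff_index_eq)
    then show False using that by simp
  qed
  have x0: "x \<noteq> (0, 0)"
  proof
    assume "x = (0, 0)"
    then have "(fstep p ^^ 1) x = x" by (simp add: fstep_def)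
    then show False using notper[of 1] L2 by simp
  qed
  have perk: "(fstep p ^^ zp_order p) x = x" using per_k[OF xV Pk] .
  have "(fstep p ^^ (zp_order p mod L)) x = x" using per_mod[OF perk perL] .
  then have "zp_order p mod L = 0" using notper[of "zp_order p mod L"] L0 by (meson mod_less_divisor not_gr_zero)
  then have Ldk: "L dvd 4 * t" using kt by (simp add: dvd_eq_mod_eq_0)
  have "(fstep p ^^ (4 * L)) x = x" using per_mult[OF perL, of 4] by (simp add: mult.commute)
  then have "[(-4)^L = 1] (mod p)" using per_scalar[OF pr(1) xV x0] by blast
  then have "t dvd L" using ord_dvd[OF t0 tt tmin] by blast
  then obtain m where m: "L = t * m" by blast
  then have "m dvd 4" using Ldk t0 by simp
  moreover have "m \<noteq> 4" using m kt Lk L_def by auto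
  ultimately have "m dvd 2"
  proof -
    have "m \<le> 4" using \<open>m dvd 4\<close> by (simp add: dvd_imp_le)
    then have "m = 0 \<or> m = 1 \<or> m = 2 \<or> m = 3 \<or> m = 4" by auto
    then show ?thesis using \<open>m dvd 4\<close> \<open>m \<noteq> 4\<close> by auto
  qed
  then obtain r where r: "2 = m * r" by blast
  have "(fstep p ^^ (L * r)) x = x" using per_mult[OF perL] .
  moreover have "L * r = t * 2" unfolding m r by (rule mult.assoc)
  then have "L * r = 2 * t" by simp
  ultimately have per2t: "(fstep p ^^ (2 * t)) x = x" by simp
  have "2 dvd t" using k8 unfolding kt by presburger
  then obtain s where s: "t = 2 * s" by blast
  have "(fstep p ^^ (4 * s)) x = x" using per2t s by (simp add: mult.assoc)
  then have "[(-4)^s = 1] (mod p)" using per_scalar[OF pr(1) xV x0] by blast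
  moreover have "0 < s" "s < t" using s t0 by auto
  ultimately show False using tmin by blast
qed


lemma dir2:
  fixes p :: int
  assumes pr: "prime p" "odd p" and k8: "\<not> 8 dvd zp_order p"
  shows "\<exists>vs. secondary_cycle p vs"
proof -
  obtain t where kt: "zp_order p = 4 * t" and t0: "t > 0" and tt: "[(-4)^t = 1] (mod p)"
    and tmin: "\<And>m. 0 < m \<Longrightarrow> m < t \<Longrightarrow> \<not> [(-4)^m = 1] (mod p)"
    using order_props[OF pr] by blast
  have p2: "p > 2" using p_facts[OF pr] by simp
  have "odd t" using k8 unfolding kt by presburger
  then obtain s where s: "t = 2 * s + 1" using oddE by blast
  define c where "c = 2 * (-4::int)^s"
  define c' where "c' = c mod p"
  define x where "x = (1::int, c')"
  have c'r: "0 \<le> c'" "c' < p" using p2 by (simp_all add: c'_def)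
  have xV: "x \<in> gamma_vertices p" using c'r p2 by (simp add: x_def gamma_vertices_def)
  have tt2: "2 * t = 4 * s + 2" using s by simp
  have cAB2: "cA (2 * t) = 0" "cB (2 * t) = c" unfolding tt2 using cAB_closed[of s] by (simp_all add: c_def)
  have "(-4::int)^t = -4 * ((-4)^s)^2" unfolding s by (simp add: power_even_eq)
  then have cc: "-(c * c) = (-4)^t" by (simp add: c_def power2_eq_square algebra_simps)
  have "[c' = c] (mod p)" by (simp add: c'_def cong_def)
  then have "[-(c * c') = -(c * c)] (mod p)" by (intro cong_minus_minus_iff[THEN iffD2] cong_mult cong_refl)
  then have "[-(c * c') = 1] (mod p)" using cc tt by (metis cong_trans)
  then have k1: "(-(c * c')) mod p = 1" using p2 by (simp add: cong_def)
  have per2t: "(fstep p ^^ (2 * t)) x = x"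
    using f_iter[OF xV, of "2*t"] cAB2 k1 by (simp add: x_def c'_def)
  have not1: "(fstep p ^^ 1) x \<noteq> x"
  proof
    assume "(fstep p ^^ 1) x = x"
    then have e1: "(1 - c') mod p = 1 mod p" and e2: "(1 + c') mod p = c'"
      using p2 by (simp_all add: fstep_def x_def)
    from e1 have "p dvd (1 - c') - 1" by (simp add: mod_eq_dvd_iff)
    then have "p dvd c'" by (metis dvd_minus_iff diff_diff_cancel diff_zero minus_diff_eq diff_diff_eq2 add.commute diff_add_cancel)
    then have "c' = 0" using c'r zdvd_imp_le by fastforce
    then show False using e2 p2 by simp
  qed
  define d where "d = (LEAST n. 0 < n \<and> (fstep p ^^ n) x = x)"
  have ex: "0 < 2 * t \<and> (fstep p ^^ (2 * t)) x = x" using per2t t0 by simp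
  have d1: "0 < d \<and> (fstep p ^^ d) x = x" unfolding d_def using ex by (rule LeastI)
  have d2: "d \<le> 2 * t" unfolding d_def using ex by (rule Least_le)
  have d3: "(fstep p ^^ j) x \<noteq> x" if "0 < j" "j < d" for j
    using not_less_Least[of j "\<lambda>n. 0 < n \<and> (fstep p ^^ n) x = x"] that unfolding d_def by blast
  have dne1: "d \<noteq> 1" using d1 not1 by auto
  define vs where "vs = map (\<lambda>i. (fstep p ^^ i) x) [0..<d]"
  have len: "length vs = d" by (simp add: vs_def)
  have nth: "vs ! i = (fstep p ^^ i) x" if "i < d" for i using that by (simp add: vs_def)
  have neq: "(fstep p ^^ i) x \<noteq> (fstep p ^^ j) x" if "i < j" "j < d" for i j
  proof
    assume eq: "(fstep p ^^ i) x = (fstep p ^^ j) x"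
    have "(fstep p ^^ (d - j + i)) x = (fstep p ^^ (d - j)) ((fstep p ^^ i) x)"
      by (simp add: funpow_add)
    also have "\<dots> = (fstep p ^^ (d - j)) ((fstep p ^^ j) x)" using eq by simp
    also have "\<dots> = (fstep p ^^ (d - j + j)) x" by (simp add: funpow_add)
    also have "\<dots> = x" using that d1 by simp
    finally have fe: "(fstep p ^^ (d - j + i)) x = x" .
    have pos: "0 < d - j + i" using that by linarith
    have lt: "d - j + i < d" using that by linarith
    show False using d3[OF pos lt] fe by contradiction
  qed
  have dist: "distinct vs"
    unfolding distinct_conv_nth len
  proof (intro allI impI)
    fix i j assume "i < d" "j < d" "i \<noteq> j"
    then show "vs ! i \<noteq> vs ! j" using neq[of i j] neq[of j i] nth by (cases "i < j") auto
  qed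
  have setV: "set vs \<subseteq> gamma_vertices p" using fiter_V[OF _ xV] p2 by (auto simp: vs_def)
  have arcs: "gamma_arc p (vs ! i) (vs ! ((i + 1) mod length vs))" if "i < length vs" for i
  proof -
    have i: "i < d" using that len by simp
    have V: "vs ! i \<in> gamma_vertices p" using fiter_V[OF _ xV] p2 nth[OF i] by simp
    have "vs ! ((i + 1) mod d) = fstep p (vs ! i)"
    proof (cases "i + 1 < d")
      case True
      then show ?thesis using nth[OF True] nth[OF i] by simp
    next
      case False
      then have "i + 1 = d" using i by simp
      then have m0: "(i + 1) mod d = 0" by simp
      have "fstep p (vs ! i) = (fstep p ^^ Suc i) x" using nth[OF i] by simp
      also have "\<dots> = (fstep p ^^ d) x" using \<open>i + 1 = d\<close> by simp
      also have "\<dots> = x" using d1 by simp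
      also have "x = vs ! 0" using nth[of 0] d1 by simp
      finally show ?thesis unfolding m0 by simp
    qed
    then show ?thesis using V len by (simp add: arc_iff)
  qed
  have "directed_cycle p vs"
    unfolding directed_cycle_def using dist setV arcs d1 len by auto
  moreover have "length vs \<noteq> zp_order p" using len d2 kt t0 by simp
  moreover have "length vs \<noteq> 1" using len dne1 by simp
  ultimately show ?thesis unfolding secondary_cycle_def by blast
qed

theorem corollary7p3:
  fixes p :: int
  assumes "prime p" and "odd p"
  shows "(\<exists>vs. secondary_cycle p vs) \<longleftrightarrow> \<not> (8 dvd zp_order p)"
  using dir1[OF assms] dir2[OF assms] by blast

end
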